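(* Let $X=\{x_1,\dots,x_n\}$ be a finite set of alternatives, let $k\ge 1$ be an integer, let $\mathcal{B}=\{B_1,\dots,B_m\}$ be a collection of non-empty subsets of $X$ and let $\bm{c}$ be a choice function on $\mathcal{B}$ (i.e. $\bm{c}(B_i)\in B_i$). Write $b_i=|B_i|$. Then $(\mathcal{B},\bm{c})$ is rationalizable with $k^{th}$-order choice under limited attention if and only if there exist real numbers $u_1,\dots,u_n>0$ (one for each alternative), binary numbers $\delta_{ij}\in\{0,1\}$ ($i=1,\dots,m$, $j=1,\dots,n$), and a constant $M>0$ (the "big-$M$", taken arbitrarily large, so that a constraint with a term $(1-\delta_{ij})M$ is void when $\delta_{ij}=0$) such that: (1) for every $i$ and every $x_j\in B_i$ with $x_j\neq \bm{c}(B_i)$, writing $\bm{c}(B_i)=x_l$: $u_l> u_j-(1-\delta_{ij})M$; (2) $\delta_{ij}=0$ whenever $x_j\notin B_i$; (3) for all $i,j$ with $\bm{c}(B_i)\ne\bm{c}(B_j)$ and $\bm{c}(B_i),\bm{c}(B_j)\in B_i\cap B_j$: $\sum_{x_l\in B_i\setminus B_j}\delta_{il}+\sum_{x_l\in B_j\setminus B_i}\delta_{jl}\ge 1$; (4) for every $i$: $\sum_{x_j\in B_i}\delta_{ij}\ge\min\{k,b_i\}$.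
   Context: A strict preference relation on $X$ is a complete, transitive and asymmetric binary relation $\succ$. An attention filter is a map $\Gamma$ from non-empty subsets of $X$ to subsets of $X$ such that $\Gamma(B)\subseteq B$ for every $B$, and $\Gamma(B)=\Gamma(B\setminus\{x\})$ for every $B$ and every $x\in B\setminus\Gamma(B)$. A data set $(\mathcal{B},\bm{c})$ is rationalizable with $k^{th}$-order choice under limited attention if there exist a strict preference relation $\succ$ and an attention filter $\Gamma$ with $|\Gamma(B)|\ge\min\{|B|,k\}$ for all non-empty $B\subseteq X$, such that for every $B\in\mathcal{B}$, $\bm{c}(B)$ is the $\succ$-maximal element of $\Gamma(B)$. (Intended interpretation: $\delta_{ij}=1$ iff $x_j\in\Gamma(B_i)$, and $u_j$ is a utility of $x_j$.) *)

theory Defs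
  imports Complex_Main
begin

definition strict_preference :: "'a set \<Rightarrow> ('a \<times> 'a) set \<Rightarrow> bool" where
  "strict_preference X R \<longleftrightarrow>
     R \<subseteq> X \<times> X \<and>
     (\<forall>x\<in>X. \<forall>y\<in>X. x \<noteq> y \<longrightarrow> (x, y) \<in> R \<or> (y, x) \<in> R) \<and>
     trans R \<and>
     (\<forall>x y. (x, y) \<in> R \<longrightarrow> (y, x) \<notin> R)"

text \<open>An attention filter on the non-empty subsets of X.  (The guard
  B - {x} nonempty only avoids applying Gamma to the empty set, on which it is undefined.)\<close>
definition attention_filter :: "'a set \<Rightarrow> ('a set \<Rightarrow> 'a set) \<Rightarrow> bool" where
  "attention_filter X \<Gamma> \<longleftrightarrow>
     (\<forall>B. B \<subseteq> X \<and> B \<noteq> {} \<longrightarrow>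
        \<Gamma> B \<subseteq> B \<and>
        (\<forall>x \<in> B - \<Gamma> B. B - {x} \<noteq> {} \<longrightarrow> \<Gamma> B = \<Gamma> (B - {x})))"

definition is_max_in :: "('a \<times> 'a) set \<Rightarrow> 'a set \<Rightarrow> 'a \<Rightarrow> bool" where
  "is_max_in R A a \<longleftrightarrow> a \<in> A \<and> (\<forall>y\<in>A. y \<noteq> a \<longrightarrow> (a, y) \<in> R)"

definition rationalizable_kLA ::
  "nat \<Rightarrow> 'a set \<Rightarrow> 'a set set \<Rightarrow> ('a set \<Rightarrow> 'a) \<Rightarrow> bool" where
  "rationalizable_kLA k X \<B> c \<longleftrightarrow>
     (\<exists>R \<Gamma>. strict_preference X R \<and> attention_filter X \<Gamma> \<and>
        (\<forall>B. B \<subseteq> X \<and> B \<noteq> {} \<longrightarrow> card (\<Gamma> B) \<ge> min (card B) k) \<and>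
        (\<forall>B\<in>\<B>. is_max_in R (\<Gamma> B) (c B)))"

end

theory Submission
  imports Defs
begin

lemma sum_ind_card:
  assumes "finite B"
  shows "(\<Sum>x\<in>B. (if x \<in> A then 1 else 0 :: int)) = int (card (B \<inter> A))"
  using assms by (simp add: sum.If_cases Int_def)

lemma af_shrink:
  assumes af: "attention_filter X \<Gamma>" and fin: "finite X"
  shows "S \<subseteq> X \<Longrightarrow> \<Gamma> S \<noteq> {} \<Longrightarrow> \<Gamma> S \<subseteq> T \<Longrightarrow> T \<subseteq> S \<Longrightarrow> \<Gamma> T = \<Gamma> S"
proof (induction "card (S - T)" arbitrary: S)
  case 0
  have "finite S" using 0(2) fin finite_subset by blast
  then have "S - T = {}" using 0(1) by simp
  then have "S = T" using 0(5) by blast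
  then show ?case by simp
next
  case (Suc n S)
  have SX: "S \<subseteq> X" and Gne: "\<Gamma> S \<noteq> {}" and GT: "\<Gamma> S \<subseteq> T" and TS: "T \<subseteq> S"
    using Suc.prems by auto
  have finS: "finite S" using SX fin finite_subset by blast
  have "S - T \<noteq> {}" using Suc.hyps(2) by (metis card.empty nat.distinct(1))
  then obtain x where x: "x \<in> S" "x \<notin> T" by blast
  have Sne: "S \<noteq> {}" using x by blast
  have xG: "x \<in> S - \<Gamma> S" using x GT by blast
  have ne: "S - {x} \<noteq> {}" using Gne GT TS x by blast
  have "\<forall>x \<in> S - \<Gamma> S. S - {x} \<noteq> {} \<longrightarrow> \<Gamma> S = \<Gamma> (S - {x})"
  proof -
    have H: "S \<subseteq> X \<and> S \<noteq> {} \<longrightarrow> \<Gamma> S \<subseteq> S \<and> (\<forall>x \<in> S - \<Gamma> S. S - {x} \<noteq> {} \<longrightarrow> \<Gamma> S = \<Gamma> (S - {x}))"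
      using af unfolding attention_filter_def by (rule spec)
    show ?thesis using conjunct2[OF mp[OF H conjI[OF SX Sne]]] .
  qed
  then have eq: "\<Gamma> S = \<Gamma> (S - {x})" using xG ne by blast
  have c: "n = card ((S - {x}) - T)"
  proof -
    have "(S - {x}) - T = (S - T) - {x}" by blast
    moreover have "x \<in> S - T" using x by blast
    moreover have "finite (S - T)" using finS by blast
    ultimately have "card ((S - {x}) - T) = card (S - T) - 1" using card_Diff_singleton by metis
    then show ?thesis using Suc.hyps(2) by linarith
  qed
  have "S - {x} \<subseteq> X" using SX by blast
  moreover have "\<Gamma> (S - {x}) \<noteq> {}" using eq Gne by simp
  moreover have "\<Gamma> (S - {x}) \<subseteq> T" using eq GT by simp
  moreover have "T \<subseteq> S - {x}" using TS x by blast
  ultimately have "\<Gamma> T = \<Gamma> (S - {x})" using Suc.hyps(1)[OF c] by blast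
  then show ?case using eq by simp
qed

theorem theorem2:
  fixes X :: "'a set" and k :: nat and \<B> :: "'a set set" and c :: "'a set \<Rightarrow> 'a"
  assumes "finite X"
    and "k \<ge> 1"
    and "\<forall>B\<in>\<B>. B \<noteq> {} \<and> B \<subseteq> X"
    and "\<forall>B\<in>\<B>. c B \<in> B"
  shows "rationalizable_kLA k X \<B> c \<longleftrightarrow>
    (\<exists>(u :: 'a \<Rightarrow> real) (\<delta> :: 'a set \<Rightarrow> 'a \<Rightarrow> int) (M :: real).
       (\<forall>x\<in>X. u x > 0) \<and> M > 0 \<and>
       (\<forall>B\<in>\<B>. \<forall>x\<in>X. \<delta> B x \<in> {0, 1}) \<and>
       (\<forall>B\<in>\<B>. \<forall>x\<in>B. x \<noteq> c B \<longrightarrow> u (c B) > u x - (1 - of_int (\<delta> B x)) * M) \<and>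
       (\<forall>B\<in>\<B>. \<forall>x\<in>X. x \<notin> B \<longrightarrow> \<delta> B x = 0) \<and>
       (\<forall>B\<in>\<B>. \<forall>B'\<in>\<B>. c B \<noteq> c B' \<and> c B \<in> B \<inter> B' \<and> c B' \<in> B \<inter> B' \<longrightarrow>
          (\<Sum>x\<in>B - B'. \<delta> B x) + (\<Sum>x\<in>B' - B. \<delta> B' x) \<ge> 1) \<and>
       (\<forall>B\<in>\<B>. (\<Sum>x\<in>B. \<delta> B x) \<ge> int (min k (card B))))"
  (is "?L \<longleftrightarrow> ?R")
proof
  assume ?L
  then obtain R \<Gamma> where sp: "strict_preference X R" and af: "attention_filter X \<Gamma>"
    and cardc: "\<forall>B. B \<subseteq> X \<and> B \<noteq> {} \<longrightarrow> card (\<Gamma> B) \<ge> min (card B) k"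
    and mx: "\<forall>B\<in>\<B>. is_max_in R (\<Gamma> B) (c B)"
    unfolding rationalizable_kLA_def by blast
  have RX: "R \<subseteq> X \<times> X" and trR: "trans R" and asR: "\<And>x y. (x, y) \<in> R \<Longrightarrow> (y, x) \<notin> R"
    using sp unfolding strict_preference_def by auto
  define u where "u x = real (card {y\<in>X. (x, y) \<in> R}) + 1" for x
  define \<delta> where "\<delta> B x = (if x \<in> \<Gamma> B then 1 else 0 :: int)" for B x
  define M where "M = real (card X) + 1"
  have Ru: "u b < u a" if "(a, b) \<in> R" for a b
  proof -
    have "{y\<in>X. (b, y) \<in> R} \<subset> {y\<in>X. (a, y) \<in> R}"
    proof
      show "{y\<in>X. (b, y) \<in> R} \<subseteq> {y\<in>X. (a, y) \<in> R}"
        using that trR by (auto dest: transD)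
      have "b \<in> X" using that RX by auto
      moreover have "(b, b) \<notin> R" using asR by blast
      ultimately show "{y\<in>X. (b, y) \<in> R} \<noteq> {y\<in>X. (a, y) \<in> R}" using that by auto
    qed
    then have "card {y\<in>X. (b, y) \<in> R} < card {y\<in>X. (a, y) \<in> R}"
      using assms(1) by (intro psubset_card_mono) auto
    then show ?thesis unfolding u_def by simp
  qed
  have ub: "1 \<le> u x \<and> u x \<le> M" for x
  proof -
    have "card {y\<in>X. (x, y) \<in> R} \<le> card X" using assms(1) by (intro card_mono) auto
    then show ?thesis unfolding u_def M_def by simp
  qed
  have GB: "\<Gamma> B \<subseteq> B" if "B \<in> \<B>" for B
    using af assms(3) that unfolding attention_filter_def by blast
  have cG: "c B \<in> \<Gamma> B" if "B \<in> \<B>" for B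
    using mx that unfolding is_max_in_def by blast
  show ?R
  proof (intro exI conjI)
    show "\<forall>x\<in>X. u x > 0" using ub by (metis less_le_trans zero_less_one)
    show "M > 0" unfolding M_def by simp
    show "\<forall>B\<in>\<B>. \<forall>x\<in>X. \<delta> B x \<in> {0, 1}" unfolding \<delta>_def by simp
    show "\<forall>B\<in>\<B>. \<forall>x\<in>B. x \<noteq> c B \<longrightarrow> u (c B) > u x - (1 - of_int (\<delta> B x)) * M"
    proof (intro ballI impI)
      fix B x assume B: "B \<in> \<B>" and x: "x \<in> B" "x \<noteq> c B"
      show "u (c B) > u x - (1 - of_int (\<delta> B x)) * M"
      proof (cases "x \<in> \<Gamma> B")
        case True
        then have "(c B, x) \<in> R" using mx B x unfolding is_max_in_def by blast
        then show ?thesis using Ru True unfolding \<delta>_def by simp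
      next
        case False
        then show ?thesis using ub[of x] ub[of "c B"] unfolding \<delta>_def by simp
      qed
    qed
    show "\<forall>B\<in>\<B>. \<forall>x\<in>X. x \<notin> B \<longrightarrow> \<delta> B x = 0" using GB unfolding \<delta>_def by auto
    show "\<forall>B\<in>\<B>. \<forall>B'\<in>\<B>. c B \<noteq> c B' \<and> c B \<in> B \<inter> B' \<and> c B' \<in> B \<inter> B' \<longrightarrow>
          (\<Sum>x\<in>B - B'. \<delta> B x) + (\<Sum>x\<in>B' - B. \<delta> B' x) \<ge> 1"
    proof (intro ballI impI)
      fix B B' assume B: "B \<in> \<B>" and B': "B' \<in> \<B>"
        and h: "c B \<noteq> c B' \<and> c B \<in> B \<inter> B' \<and> c B' \<in> B \<inter> B'"
      have fB: "finite B" "finite B'" using B B' assms(1,3) finite_subset by blast+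
      show "(\<Sum>x\<in>B - B'. \<delta> B x) + (\<Sum>x\<in>B' - B. \<delta> B' x) \<ge> 1"
      proof (rule ccontr)
        assume "\<not> ?thesis"
        moreover have "(\<Sum>x\<in>B - B'. \<delta> B x) \<ge> 0" "(\<Sum>x\<in>B' - B. \<delta> B' x) \<ge> 0"
          unfolding \<delta>_def by (auto intro: sum_nonneg)
        ultimately have z: "(\<Sum>x\<in>B - B'. \<delta> B x) = 0" "(\<Sum>x\<in>B' - B. \<delta> B' x) = 0" by auto
        have "\<forall>x\<in>B - B'. \<delta> B x = 0"
          using z(1) fB by (subst sum_nonneg_eq_0_iff[symmetric]) (auto simp: \<delta>_def)
        then have s1: "\<Gamma> B \<subseteq> B \<inter> B'"
        proof (intro subsetI)
          fix x assume x: "x \<in> \<Gamma> B" and all: "\<forall>x\<in>B - B'. \<delta> B x = 0"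
          have "x \<in> B" using x GB[OF B] by blast
          moreover have "x \<in> B'" using all x \<open>x \<in> B\<close> unfolding \<delta>_def by (metis DiffI one_neq_zero)
          ultimately show "x \<in> B \<inter> B'" by blast
        qed
        have "\<forall>x\<in>B' - B. \<delta> B' x = 0"
          using z(2) fB by (subst sum_nonneg_eq_0_iff[symmetric]) (auto simp: \<delta>_def)
        then have s2: "\<Gamma> B' \<subseteq> B \<inter> B'"
        proof (intro subsetI)
          fix x assume x: "x \<in> \<Gamma> B'" and all: "\<forall>x\<in>B' - B. \<delta> B' x = 0"
          have "x \<in> B'" using x GB[OF B'] by blast
          moreover have "x \<in> B" using all x \<open>x \<in> B'\<close> unfolding \<delta>_def by (metis DiffI one_neq_zero)
          ultimately show "x \<in> B \<inter> B'" by blast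
        qed
        have e1: "\<Gamma> (B \<inter> B') = \<Gamma> B"
          using af_shrink[OF af assms(1) _ _ s1 Int_lower1] cG[OF B] B assms(3) by blast
        have e2: "\<Gamma> (B \<inter> B') = \<Gamma> B'"
          using af_shrink[OF af assms(1) _ _ s2 Int_lower2] cG[OF B'] B' assms(3) by blast
        have "(c B, c B') \<in> R" using mx B cG[OF B'] e1 e2 h unfolding is_max_in_def by metis
        moreover have "(c B', c B) \<in> R" using mx B' cG[OF B] e1 e2 h unfolding is_max_in_def by metis
        ultimately show False using asR by blast
      qed
    qed
    show "\<forall>B\<in>\<B>. (\<Sum>x\<in>B. \<delta> B x) \<ge> int (min k (card B))"
    proof
      fix B assume B: "B \<in> \<B>"
      have fB: "finite B" using B assms(1,3) finite_subset by blast
      have "(\<Sum>x\<in>B. \<delta> B x) = int (card (B \<inter> \<Gamma> B))"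
        unfolding \<delta>_def using sum_ind_card[OF fB] by simp
      also have "B \<inter> \<Gamma> B = \<Gamma> B" using GB[OF B] by auto
      finally show "(\<Sum>x\<in>B. \<delta> B x) \<ge> int (min k (card B))"
        using cardc B assms(3) by (simp add: min.commute)
    qed
  qed
next
  assume ?R
  then obtain u :: "'a \<Rightarrow> real" and \<delta> :: "'a set \<Rightarrow> 'a \<Rightarrow> int" and M :: real where
    d01: "\<forall>B\<in>\<B>. \<forall>x\<in>X. \<delta> B x \<in> {0, 1}" and
    c1: "\<forall>B\<in>\<B>. \<forall>x\<in>B. x \<noteq> c B \<longrightarrow> u (c B) > u x - (1 - of_int (\<delta> B x)) * M" and
    c3: "\<forall>B\<in>\<B>. \<forall>B'\<in>\<B>. c B \<noteq> c B' \<and> c B \<in> B \<inter> B' \<and> c B' \<in> B \<inter> B' \<longrightarrow>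
          (\<Sum>x\<in>B - B'. \<delta> B x) + (\<Sum>x\<in>B' - B. \<delta> B' x) \<ge> 1" and
    c4: "\<forall>B\<in>\<B>. (\<Sum>x\<in>B. \<delta> B x) \<ge> int (min k (card B))"
    by (elim exE conjE) (rule that; assumption)
  obtain f :: "'a \<Rightarrow> nat" and n where f: "inj_on f X"
    using finite_imp_inj_to_nat_seg[OF assms(1)] by blast
  define R where "R = {(x, y). x \<in> X \<and> y \<in> X \<and> (u y < u x \<or> (u x = u y \<and> f x < f y))}"
  define D where "D B = {x\<in>B. \<delta> B x = 1} \<union> {c B}" for B
  define F where "F S = {B\<in>\<B>. D B \<subseteq> S \<and> S \<subseteq> B}" for S
  define cS where "cS S = c (SOME B. B \<in> F S)" for S
  define \<Gamma> where "\<Gamma> S = (if F S = {} then S else {y\<in>S. y = cS S \<or> (cS S, y) \<in> R})" for S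
  have BX: "B \<subseteq> X" if "B \<in> \<B>" for B using assms(3) that by blast
  have finB: "finite B" if "B \<in> \<B>" for B using BX[OF that] assms(1) finite_subset by blast
  have DB: "D B \<subseteq> B" if "B \<in> \<B>" for B using assms(4) that unfolding D_def by auto
  have DR: "(c B, y) \<in> R" if "B \<in> \<B>" "y \<in> D B" "y \<noteq> c B" for B y
  proof -
    have y: "y \<in> B" "\<delta> B y = 1" using that unfolding D_def by auto
    have "y \<in> B" "y \<noteq> c B" using y that by auto
    then have "u (c B) > u y - (1 - of_int (\<delta> B y)) * M" using c1 that(1) by blast
    then have "u (c B) > u y" using y by simp
    then show ?thesis unfolding R_def using y BX[OF that(1)] assms(4) that(1) by auto
  qed
  have uniq: "c B = c B'" if "B \<in> F S" "B' \<in> F S" for S B B'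
  proof (rule ccontr)
    assume ne: "c B \<noteq> c B'"
    have B: "B \<in> \<B>" "D B \<subseteq> S" "S \<subseteq> B" and B': "B' \<in> \<B>" "D B' \<subseteq> S" "S \<subseteq> B'"
      using that unfolding F_def by auto
    have cc: "c B \<in> B \<inter> B'" "c B' \<in> B \<inter> B'" using B B' unfolding D_def by auto
    have z1: "(\<Sum>x\<in>B - B'. \<delta> B x) = 0"
    proof (rule sum.neutral, rule ballI)
      fix x assume x: "x \<in> B - B'"
      then have "x \<notin> D B" using B B' by auto
      then have "\<delta> B x \<noteq> 1" using x unfolding D_def by auto
      moreover have "\<delta> B x \<in> {0, 1}" using d01 B BX x by blast
      ultimately show "\<delta> B x = 0" by auto
    qed
    have z2: "(\<Sum>x\<in>B' - B. \<delta> B' x) = 0"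
    proof (rule sum.neutral, rule ballI)
      fix x assume x: "x \<in> B' - B"
      then have "x \<notin> D B'" using B B' by auto
      then have "\<delta> B' x \<noteq> 1" using x unfolding D_def by auto
      moreover have "\<delta> B' x \<in> {0, 1}" using d01 B' BX x by blast
      ultimately show "\<delta> B' x = 0" by auto
    qed
    have "(\<Sum>x\<in>B - B'. \<delta> B x) + (\<Sum>x\<in>B' - B. \<delta> B' x) \<ge> 1"
      using c3 B(1) B'(1) ne cc by blast
    then show False using z1 z2 by simp
  qed
  have cSeq: "cS S = c B" if "B \<in> F S" for S B
  proof -
    have "(SOME B. B \<in> F S) \<in> F S" using that by (rule someI)
    then show ?thesis unfolding cS_def using uniq that by blast
  qed
  have DG: "D B \<subseteq> \<Gamma> S" if "B \<in> F S" for S B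
  proof
    fix y assume y: "y \<in> D B"
    have B: "B \<in> \<B>" "D B \<subseteq> S" using that unfolding F_def by auto
    have "F S \<noteq> {}" using that by auto
    then show "y \<in> \<Gamma> S" unfolding \<Gamma>_def using y B DR[OF B(1) y] cSeq[OF that] by auto
  qed
  have sp: "strict_preference X R"
    unfolding strict_preference_def
  proof (intro conjI)
    show "R \<subseteq> X \<times> X" unfolding R_def by auto
    show "\<forall>x\<in>X. \<forall>y\<in>X. x \<noteq> y \<longrightarrow> (x, y) \<in> R \<or> (y, x) \<in> R"
    proof (intro ballI impI)
      fix x y assume xy: "x \<in> X" "y \<in> X" "x \<noteq> y"
      then have "f x \<noteq> f y" using f inj_on_def by metis
      then show "(x, y) \<in> R \<or> (y, x) \<in> R" unfolding R_def using xy by auto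
    qed
    show "trans R" unfolding R_def trans_def by auto
    show "\<forall>x y. (x, y) \<in> R \<longrightarrow> (y, x) \<notin> R" unfolding R_def by auto
  qed
  have af: "attention_filter X \<Gamma>"
    unfolding attention_filter_def
  proof (intro allI impI conjI ballI)
    fix S x assume S: "S \<subseteq> X \<and> S \<noteq> {}"
    show "\<Gamma> S \<subseteq> S" unfolding \<Gamma>_def by auto
    assume x: "x \<in> S - \<Gamma> S" and ne: "S - {x} \<noteq> {}"
    have FS: "F S \<noteq> {}" using x unfolding \<Gamma>_def by auto
    then obtain B0 where B0: "B0 \<in> F S" by blast
    have xn: "x \<noteq> cS S" "(cS S, x) \<notin> R" using x FS unfolding \<Gamma>_def by auto
    have B0': "B0 \<in> F (S - {x})"
    proof -
      have "x \<notin> D B0" using DG[OF B0] x by auto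
      then show ?thesis using B0 unfolding F_def by auto
    qed
    have FS': "F (S - {x}) \<noteq> {}" using B0' by auto
    have "cS (S - {x}) = cS S" using cSeq[OF B0] cSeq[OF B0'] by simp
    then show "\<Gamma> S = \<Gamma> (S - {x})" unfolding \<Gamma>_def using FS FS' xn by auto
  qed
  have cardG: "card (\<Gamma> S) \<ge> min (card S) k" if "S \<subseteq> X" "S \<noteq> {}" for S
  proof (cases "F S = {}")
    case True
    then show ?thesis unfolding \<Gamma>_def by simp
  next
    case False
    then obtain B where B: "B \<in> F S" by blast
    have B': "B \<in> \<B>" "S \<subseteq> B" using B unfolding F_def by auto
    have finS: "finite S" using that assms(1) finite_subset by blast
    have "int (min k (card B)) \<le> (\<Sum>x\<in>B. \<delta> B x)" using c4 B' by blast
    also have "(\<Sum>x\<in>B. \<delta> B x) = (\<Sum>x\<in>B. (if x \<in> {x\<in>B. \<delta> B x = 1} then 1 else 0))"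
    proof (rule sum.cong)
      fix x assume "x \<in> B"
      moreover have "\<delta> B x \<in> {0, 1}" using d01 B' BX \<open>x \<in> B\<close> by blast
      ultimately show "\<delta> B x = (if x \<in> {x\<in>B. \<delta> B x = 1} then 1 else 0)" by auto
    qed simp
    also have "\<dots> = int (card (B \<inter> {x\<in>B. \<delta> B x = 1}))" by (rule sum_ind_card[OF finB[OF B'(1)]])
    also have "card (B \<inter> {x\<in>B. \<delta> B x = 1}) \<le> card (D B)"
      using finB[OF B'(1)] unfolding D_def by (intro card_mono) auto
    also have "card (D B) \<le> card (\<Gamma> S)"
      using DG[OF B] finS unfolding \<Gamma>_def by (intro card_mono) auto
    finally have "min k (card B) \<le> card (\<Gamma> S)" by simp
    moreover have "card S \<le> card B" using B' finB by (intro card_mono) auto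
    ultimately show ?thesis by linarith
  qed
  have mx: "is_max_in R (\<Gamma> B) (c B)" if B: "B \<in> \<B>" for B
  proof -
    have BF: "B \<in> F B" unfolding F_def using B DB by auto
    then have "F B \<noteq> {}" by auto
    then have "\<Gamma> B = {y\<in>B. y = c B \<or> (c B, y) \<in> R}" unfolding \<Gamma>_def using cSeq[OF BF] by simp
    then show ?thesis unfolding is_max_in_def using assms(4) B by auto
  qed
  show ?L unfolding rationalizable_kLA_def using sp af cardG mx by blast
qed

end
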